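(* Let $q\equiv 1\pmod 6$ be a prime power, let $\rho$ be a primitive element of $\mathbb F_q$, and let $\pi : (\mathbb Z_2^2)^* \to \mathbb Z_3$ be a bijection. Suppose $c = c^3_q(1,2)$ is odd and $l = (c+1)/2$. Then $\operatorname{Cay}(G_{l,2,q},S(\pi))$ is edge-regular with parameters $(4lq,\ 4l-2+q,\ 4l-2)$ and has a regular clique of order $4l$.
   Context: For an additive group $A$, $A^*=A\setminus\{0\}$. $G_{l,2,q}=\mathbb Z_l\oplus\mathbb Z_2^2\oplus\mathbb F_q$. $S_0=\{(g,0): g\in(\mathbb Z_l\oplus\mathbb Z_2^2)^*\}$; for $z\in(\mathbb Z_2^2)^*$, $S_{z,\pi}=\{(0,z,\rho^j): j\in\mathbb Z,\ j\equiv\pi(z)\pmod 3\}$; $S(\pi)=S_0\cup\bigcup_z S_{z,\pi}$; $\operatorname{Cay}(G_{l,2,q},S(\pi))$ has vertex set $G_{l,2,q}$ with $x\sim y$ iff $y-x\in S(\pi)$. Write $q=6r+1$; $C^3_q(i)=\{\rho^{3j+i}:0\le j\le 2r-1\}$ for $i\in\mathbb Z_3$, $c^3_q(a,b)=|(C^3_q(a)+1)\cap C^3_q(b)|$. A graph is edge-regular with parameters $(N,k,\lambda)$ if it is non-empty, has $N$ vertices, is $k$-regular, and every two adjacent vertices have exactly $\lambda$ common neighbours. A clique $\mathcal C$ is regular if every vertex outside $\mathcal C$ is adjacent to the same number $e>0$ of vertices of $\mathcal C$. *)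

theory Defs
  imports Main
begin

(* Elements of G_{l,2,q} = Z_l + Z_2^2 + F_q are represented as triples
   (a, (z1, z2), x) with a < l, z1, z2 in {0,1}, x in the finite field 'f. *)

definition G_set :: "nat \<Rightarrow> (nat \<times> (nat \<times> nat) \<times> 'f) set" where
  "G_set l = {0..<l} \<times> ({0,1} \<times> {0,1}) \<times> UNIV"

fun G_minus :: "nat \<Rightarrow> nat \<times> (nat \<times> nat) \<times> 'f::ab_group_add
                  \<Rightarrow> nat \<times> (nat \<times> nat) \<times> 'f \<Rightarrow> nat \<times> (nat \<times> nat) \<times> 'f" where
  "G_minus l (a, (z1, z2), x) (b, (w1, w2), y) =
     ((a + l - b) mod l, ((z1 + 2 - w1) mod 2, (z2 + 2 - w2) mod 2), x - y)"

definition Z22_star :: "(nat \<times> nat) set" where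
  "Z22_star = {(0,1), (1,0), (1,1)}"

definition S0 :: "nat \<Rightarrow> (nat \<times> (nat \<times> nat) \<times> 'f::zero) set" where
  "S0 l = {(a, z, 0) | a z. a \<in> {0..<l} \<and> z \<in> {0,1} \<times> {0,1} \<and> (a, z) \<noteq> (0, (0, 0))}"

definition S_z :: "(nat \<times> nat \<Rightarrow> nat) \<Rightarrow> 'f::field \<Rightarrow> nat \<times> nat
                    \<Rightarrow> (nat \<times> (nat \<times> nat) \<times> 'f) set" where
  "S_z \<pi> \<rho> z = {(0, z, \<rho> powi j) | j::int. j mod 3 = int (\<pi> z)}"

definition S_pi :: "nat \<Rightarrow> (nat \<times> nat \<Rightarrow> nat) \<Rightarrow> 'f::field
                     \<Rightarrow> (nat \<times> (nat \<times> nat) \<times> 'f) set" where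
  "S_pi l \<pi> \<rho> = S0 l \<union> (\<Union>z\<in>Z22_star. S_z \<pi> \<rho> z)"

definition cay_adj :: "nat \<Rightarrow> (nat \<times> nat \<Rightarrow> nat) \<Rightarrow> 'f::field
     \<Rightarrow> nat \<times> (nat \<times> nat) \<times> 'f \<Rightarrow> nat \<times> (nat \<times> nat) \<times> 'f \<Rightarrow> bool" where
  "cay_adj l \<pi> \<rho> x y \<longleftrightarrow> G_minus l y x \<in> S_pi l \<pi> \<rho>"

definition primitive_element :: "'f::field \<Rightarrow> bool" where
  "primitive_element \<rho> \<longleftrightarrow> \<rho> \<noteq> 0 \<and> (\<forall>x. x \<noteq> 0 \<longrightarrow> (\<exists>j::nat. x = \<rho> ^ j))"

(* cyclotomic class C^3_q(i) = {rho^(3j+i) : 0 <= j <= 2r-1}, q = 6r+1 *)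
definition cyc_class :: "'f::{finite,field} \<Rightarrow> nat \<Rightarrow> 'f set" where
  "cyc_class \<rho> i = {\<rho> ^ (3 * j + i) | j. j < 2 * ((card (UNIV :: 'f set) - 1) div 6)}"

definition cyc_num :: "'f::{finite,field} \<Rightarrow> nat \<Rightarrow> nat \<Rightarrow> nat" where
  "cyc_num \<rho> a b = card ((\<lambda>x. x + 1) ` cyc_class \<rho> a \<inter> cyc_class \<rho> b)"

definition edge_regular :: "'v set \<Rightarrow> ('v \<Rightarrow> 'v \<Rightarrow> bool) \<Rightarrow> nat \<Rightarrow> nat \<Rightarrow> nat \<Rightarrow> bool" where
  "edge_regular V adj N k lam \<longleftrightarrow>
     finite V \<and> card V = N \<and> (\<exists>x\<in>V. \<exists>y\<in>V. adj x y) \<and>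
     (\<forall>x\<in>V. card {y\<in>V. adj x y} = k) \<and>
     (\<forall>x\<in>V. \<forall>y\<in>V. adj x y \<longrightarrow> card {w\<in>V. adj x w \<and> adj y w} = lam)"

definition is_clique :: "'v set \<Rightarrow> ('v \<Rightarrow> 'v \<Rightarrow> bool) \<Rightarrow> 'v set \<Rightarrow> bool" where
  "is_clique V adj C \<longleftrightarrow> C \<subseteq> V \<and> (\<forall>x\<in>C. \<forall>y\<in>C. x \<noteq> y \<longrightarrow> adj x y)"

definition regular_clique :: "'v set \<Rightarrow> ('v \<Rightarrow> 'v \<Rightarrow> bool) \<Rightarrow> 'v set \<Rightarrow> bool" where
  "regular_clique V adj C \<longleftrightarrow> is_clique V adj C \<and>
     (\<exists>e>0. \<forall>x\<in>V - C. card {y\<in>C. adj x y} = e)"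

end

theory Submission
  imports Defs
begin
lemma sub_int: "b < m \<Longrightarrow> int ((a + m - b) mod m) = (int a - int b) mod int m"
proof -
  assume "b < m"
  hence "int (a + m - b) = (int a - int b) + int m" by simp
  hence "int ((a + m - b) mod m) = ((int a - int b) + int m) mod int m" by (simp add: of_nat_mod)
  thus ?thesis by simp
qed
lemma M1: "(a::nat) < m \<Longrightarrow> b < m \<Longrightarrow> (b + (a + m - b) mod m) mod m = a"
proof -
  assume h: "a < m" "b < m"
  have "int ((b + (a + m - b) mod m) mod m) = (int b + (int a - int b) mod int m) mod int m"
    using sub_int[OF h(2), of a] by (simp add: of_nat_mod)
  also have "\<dots> = int a mod int m" by (simp add: mod_simps)
  also have "\<dots> = int a" using h by simp
  finally show ?thesis by simp
qed
lemma M2: "(b::nat) < m \<Longrightarrow> s < m \<Longrightarrow> ((b + s) mod m + m - b) mod m = s"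
proof -
  assume h: "b < m" "s < m"
  have "int (((b + s) mod m + m - b) mod m) = (int ((b + s) mod m) - int b) mod int m"
    using sub_int[OF h(1)] by blast
  also have "\<dots> = ((int b + int s) mod int m - int b) mod int m" by (simp add: of_nat_mod)
  also have "\<dots> = int s mod int m" by (simp add: mod_simps)
  also have "\<dots> = int s" using h by simp
  finally show ?thesis by simp
qed
lemma M3: "(x::nat) < m \<Longrightarrow> y < m \<Longrightarrow> s < m \<Longrightarrow>
   ((x + s) mod m + m - y) mod m = (s + m - (y + m - x) mod m) mod m"
proof -
  assume h: "x < m" "y < m" "s < m"
  have m0: "0 < m" using h by simp
  have "int (((x + s) mod m + m - y) mod m) = (int ((x + s) mod m) - int y) mod int m"
    using sub_int[OF h(2)] by blast
  also have "\<dots> = ((int x + int s) mod int m - int y) mod int m" by (simp add: of_nat_mod)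
  also have "\<dots> = (int x + int s - int y) mod int m" by (simp add: mod_simps)
  finally have 1: "int (((x + s) mod m + m - y) mod m) = (int x + int s - int y) mod int m" .
  have "(y + m - x) mod m < m" using m0 by simp
  hence "int ((s + m - (y + m - x) mod m) mod m) = (int s - int ((y + m - x) mod m)) mod int m"
    using sub_int by blast
  also have "\<dots> = (int s - (int y - int x) mod int m) mod int m" using sub_int[OF h(1)] by simp
  also have "\<dots> = (int x + int s - int y) mod int m" by (simp add: mod_simps algebra_simps)
  finally show ?thesis using 1 by simp
qed
lemma M4a: "(a::nat) < m \<Longrightarrow> b \<le> a \<Longrightarrow> (a + m - b) mod m = a - b"
proof -
  assume h: "a < m" "b \<le> a"
  have "a + m - b = (a - b) + m" using h by simp
  moreover have "((a - b) + m) mod m = (a - b) mod m" by (rule mod_add_self2)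
  moreover have "(a - b) mod m = a - b" using h by simp
  ultimately show ?thesis by simp
qed
lemma M4b: "(a::nat) < m \<Longrightarrow> b < m \<Longrightarrow> \<not> b \<le> a \<Longrightarrow> (a + m - b) mod m = a + m - b"
proof -
  assume h: "a < m" "b < m" "\<not> b \<le> a"
  have "a + m - b < m" using h by linarith
  thus ?thesis by simp
qed
lemma M4: "(a::nat) < m \<Longrightarrow> b < m \<Longrightarrow> ((a + m - b) mod m = 0 \<longleftrightarrow> a = b)"
proof -
  assume h: "a < m" "b < m"
  show ?thesis
  proof (cases "b \<le> a")
    case True thus ?thesis using M4a[OF h(1) True] by linarith
  next
    case False
    have "a + m - b > 0" using h False by linarith
    thus ?thesis using M4b[OF h False] False by simp
  qed
qed
lemma Z3: "a < 3 \<Longrightarrow> b < 3 \<Longrightarrow> c < (3::nat) \<Longrightarrow> a \<noteq> b \<Longrightarrow> a \<noteq> c \<Longrightarrow> b \<noteq> c \<Longrightarrow>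
   ((c + 2*a) mod 3 = 1 \<and> (b + 2*a) mod 3 = 2) \<or> ((c + 2*a) mod 3 = 2 \<and> (b + 2*a) mod 3 = 1)"
proof -
  assume h: "a < 3" "b < 3" "c < 3" "a \<noteq> b" "a \<noteq> c" "b \<noteq> c"
  have "a = 0 \<or> a = 1 \<or> a = 2" "b = 0 \<or> b = 1 \<or> b = 2" "c = 0 \<or> c = 1 \<or> c = 2" using h(1-3) by linarith+
  thus ?thesis using h(4-6) by (elim disjE) simp_all
qed

fun zsub :: "nat \<times> nat \<Rightarrow> nat \<times> nat \<Rightarrow> nat \<times> nat" where
  "zsub (z1, z2) (w1, w2) = ((z1 + 2 - w1) mod 2, (z2 + 2 - w2) mod 2)"
fun zadd :: "nat \<times> nat \<Rightarrow> nat \<times> nat \<Rightarrow> nat \<times> nat" where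
  "zadd (z1, z2) (w1, w2) = ((z1 + w1) mod 2, (z2 + w2) mod 2)"

definition "Z4 = {(0::nat,0::nat),(0,1),(1,0),(1,1)}"

lemma Z4_eq: "{0,1::nat} \<times> {0,1::nat} = Z4" unfolding Z4_def by auto
lemma Zstar: "Z22_star = Z4 - {(0,0)}" unfolding Z4_def Z22_star_def by auto

lemma Z4_cases: "w \<in> Z4 \<Longrightarrow> (w = (0,0) \<Longrightarrow> P) \<Longrightarrow> (w = (0,1) \<Longrightarrow> P) \<Longrightarrow> (w = (1,0) \<Longrightarrow> P) \<Longrightarrow> (w = (1,1) \<Longrightarrow> P) \<Longrightarrow> P"
  unfolding Z4_def by blast

lemma zsub_in: "w \<in> Z4 \<Longrightarrow> z \<in> Z4 \<Longrightarrow> zsub w z \<in> Z4"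
  by (elim Z4_cases) (simp_all add: Z4_def)
lemma zadd_in: "w \<in> Z4 \<Longrightarrow> z \<in> Z4 \<Longrightarrow> zadd w z \<in> Z4"
  by (elim Z4_cases) (simp_all add: Z4_def)
lemma zsub_0: "w \<in> Z4 \<Longrightarrow> z \<in> Z4 \<Longrightarrow> zsub w z = (0,0) \<longleftrightarrow> w = z"
  by (elim Z4_cases) simp_all
lemma zsub_self: "w \<in> Z4 \<Longrightarrow> z \<in> Z4 \<Longrightarrow> zsub w z = z \<longleftrightarrow> w = (0,0)"
  by (elim Z4_cases) simp_all
lemma zsub_sol: "w \<in> Z4 \<Longrightarrow> z \<in> Z4 \<Longrightarrow> z' \<in> Z4 \<Longrightarrow> zsub w z = z' \<longleftrightarrow> w = zsub z' z"
  by (elim Z4_cases) simp_all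
lemma zsub_ne: "w \<in> Z4 \<Longrightarrow> z \<in> Z4 \<Longrightarrow> z \<noteq> (0,0) \<Longrightarrow> zsub w z \<noteq> w"
  by (elim Z4_cases) simp_all
lemma zadd_sub: "w \<in> Z4 \<Longrightarrow> z \<in> Z4 \<Longrightarrow> zadd z (zsub w z) = w"
  by (elim Z4_cases) simp_all
lemma zsub_add: "s \<in> Z4 \<Longrightarrow> z \<in> Z4 \<Longrightarrow> zsub (zadd z s) z = s"
  by (elim Z4_cases) simp_all
lemma zsub_add2: "x \<in> Z4 \<Longrightarrow> y \<in> Z4 \<Longrightarrow> s \<in> Z4 \<Longrightarrow> zsub (zadd x s) y = zsub s (zsub y x)"
  by (elim Z4_cases) simp_all

definition G_plus :: "nat \<Rightarrow> nat \<times> (nat \<times> nat) \<times> 'f::ab_group_add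
                  \<Rightarrow> nat \<times> (nat \<times> nat) \<times> 'f \<Rightarrow> nat \<times> (nat \<times> nat) \<times> 'f" where
  "G_plus l p q = ((fst p + fst q) mod l, zadd (fst (snd p)) (fst (snd q)), snd (snd p) + snd (snd q))"

lemma Gp: "G_plus l (a,w,x) (b,z,y) = ((a + b) mod l, zadd w z, x + y)"
  unfolding G_plus_def by simp

lemma Gm: "G_minus l (a,w,x) (b,z,y) = ((a + l - b) mod l, zsub w z, x - y)"
  by (cases w; cases z) simp

lemma Vmem: "(a,w,x) \<in> G_set l \<longleftrightarrow> a < l \<and> w \<in> Z4"
  unfolding G_set_def Z4_eq by simp

context
  fixes l :: nat
  assumes l0: "0 < l"
begin

lemma GP1: "p \<in> G_set l \<Longrightarrow> q \<in> G_set l \<Longrightarrow> G_plus l p (G_minus l q p) = q"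
proof -
  assume "p \<in> G_set l" "q \<in> G_set l"
  moreover obtain a w x where p: "p = (a,w,x)" by (cases p)
  moreover obtain b z y where q: "q = (b,z,y)" by (cases q)
  ultimately have h: "a < l" "w \<in> Z4" "b < l" "z \<in> Z4" by (simp_all add: Vmem)
  show ?thesis unfolding p q Gm Gp using M1[OF h(3) h(1)] zadd_sub[OF h(4) h(2)] by simp
qed

lemma GP2: "p \<in> G_set l \<Longrightarrow> s \<in> G_set l \<Longrightarrow> G_minus l (G_plus l p s) p = s"
proof -
  assume "p \<in> G_set l" "s \<in> G_set l"
  moreover obtain a w x where p: "p = (a,w,x)" by (cases p)
  moreover obtain b z y where q: "s = (b,z,y)" by (cases s)
  ultimately have h: "a < l" "w \<in> Z4" "b < l" "z \<in> Z4" by (simp_all add: Vmem)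
  show ?thesis unfolding p q Gm Gp using M2[OF h(1) h(3)] zsub_add[OF h(4) h(2)] by simp
qed

lemma GP3: "p \<in> G_set l \<Longrightarrow> q \<in> G_set l \<Longrightarrow> s \<in> G_set l \<Longrightarrow>
   G_minus l (G_plus l p s) q = G_minus l s (G_minus l q p)"
proof -
  assume "p \<in> G_set l" "q \<in> G_set l" "s \<in> G_set l"
  moreover obtain a w x where p: "p = (a,w,x)" by (cases p)
  moreover obtain b z y where q: "q = (b,z,y)" by (cases q)
  moreover obtain c u t where s: "s = (c,u,t)" by (cases s)
  ultimately have h: "a < l" "w \<in> Z4" "b < l" "z \<in> Z4" "c < l" "u \<in> Z4" by (simp_all add: Vmem)
  have "(x + t) - y = t - (y - x)" by (simp add: algebra_simps)
  thus ?thesis unfolding p q s Gm Gp using M3[OF h(1) h(3) h(5)] zsub_add2[OF h(2) h(4) h(6)] by simp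
qed

lemma GP_in: "p \<in> G_set l \<Longrightarrow> s \<in> G_set l \<Longrightarrow> G_plus l p s \<in> G_set l"
proof -
  assume "p \<in> G_set l" "s \<in> G_set l"
  moreover obtain a w x where p: "p = (a,w,x)" by (cases p)
  moreover obtain b z y where q: "s = (b,z,y)" by (cases s)
  ultimately have h: "a < l" "w \<in> Z4" "b < l" "z \<in> Z4" by (simp_all add: Vmem)
  show ?thesis unfolding p q Gp Vmem using zadd_in[OF h(2) h(4)] l0 by simp
qed

lemma GM_in: "p \<in> G_set l \<Longrightarrow> s \<in> G_set l \<Longrightarrow> G_minus l p s \<in> G_set l"
proof -
  assume "p \<in> G_set l" "s \<in> G_set l"
  moreover obtain a w x where p: "p = (a,w,x)" by (cases p)
  moreover obtain b z y where q: "s = (b,z,y)" by (cases s)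
  ultimately have h: "a < l" "w \<in> Z4" "b < l" "z \<in> Z4" by (simp_all add: Vmem)
  show ?thesis unfolding p q Gm Vmem using zsub_in[OF h(2) h(4)] l0 by simp
qed

lemma GP_inj: "inj_on (G_plus l p) (G_set l)" if "p \<in> G_set l"
proof (rule inj_onI)
  fix s t assume "s \<in> G_set l" "t \<in> G_set l" "G_plus l p s = G_plus l p t"
  thus "s = t" using GP2[OF that] by metis
qed

lemma NB_eq: "x \<in> G_set l \<Longrightarrow> S \<subseteq> G_set l \<Longrightarrow>
   {y \<in> G_set l. G_minus l y x \<in> S} = G_plus l x ` S"
proof
  assume x: "x \<in> G_set l" and S: "S \<subseteq> G_set l"
  show "{y \<in> G_set l. G_minus l y x \<in> S} \<subseteq> G_plus l x ` S"
  proof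
    fix y assume "y \<in> {y \<in> G_set l. G_minus l y x \<in> S}"
    hence y: "y \<in> G_set l" "G_minus l y x \<in> S" by auto
    have "y = G_plus l x (G_minus l y x)" using GP1[OF x y(1)] by simp
    thus "y \<in> G_plus l x ` S" using y(2) by blast
  qed
  show "G_plus l x ` S \<subseteq> {y \<in> G_set l. G_minus l y x \<in> S}"
  proof
    fix y assume "y \<in> G_plus l x ` S"
    then obtain s where s: "s \<in> S" "y = G_plus l x s" by blast
    have sV: "s \<in> G_set l" using s S by blast
    show "y \<in> {y \<in> G_set l. G_minus l y x \<in> S}"
      using GP_in[OF x sV] GP2[OF x sV] s by simp
  qed
qed

lemma CN_eq: "x \<in> G_set l \<Longrightarrow> y \<in> G_set l \<Longrightarrow> S \<subseteq> G_set l \<Longrightarrow>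
   {w \<in> G_set l. G_minus l w x \<in> S \<and> G_minus l w y \<in> S} =
   G_plus l x ` {s \<in> S. G_minus l s (G_minus l y x) \<in> S}"
proof
  assume x: "x \<in> G_set l" and y: "y \<in> G_set l" and S: "S \<subseteq> G_set l"
  show "{w \<in> G_set l. G_minus l w x \<in> S \<and> G_minus l w y \<in> S} \<subseteq>
     G_plus l x ` {s \<in> S. G_minus l s (G_minus l y x) \<in> S}"
  proof
    fix w assume "w \<in> {w \<in> G_set l. G_minus l w x \<in> S \<and> G_minus l w y \<in> S}"
    hence w: "w \<in> G_set l" "G_minus l w x \<in> S" "G_minus l w y \<in> S" by auto
    have e: "w = G_plus l x (G_minus l w x)" using GP1[OF x w(1)] by simp
    have "G_minus l (G_minus l w x) (G_minus l y x) = G_minus l w y"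
      using GP3[OF x y GM_in[OF w(1) x]] e by simp
    thus "w \<in> G_plus l x ` {s \<in> S. G_minus l s (G_minus l y x) \<in> S}" using w e by auto
  qed
  show "G_plus l x ` {s \<in> S. G_minus l s (G_minus l y x) \<in> S} \<subseteq>
     {w \<in> G_set l. G_minus l w x \<in> S \<and> G_minus l w y \<in> S}"
  proof
    fix w assume "w \<in> G_plus l x ` {s \<in> S. G_minus l s (G_minus l y x) \<in> S}"
    then obtain s where s: "s \<in> S" "G_minus l s (G_minus l y x) \<in> S" "w = G_plus l x s" by blast
    have sV: "s \<in> G_set l" using s S by blast
    show "w \<in> {w \<in> G_set l. G_minus l w x \<in> S \<and> G_minus l w y \<in> S}"
      using GP_in[OF x sV] GP2[OF x sV] GP3[OF x y sV] s by simp
  qed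
qed

end

context
  fixes \<rho> :: "'f::{finite,field}"
  assumes prim: "primitive_element \<rho>" and q6: "card (UNIV::'f set) mod 6 = 1"
begin

lemma rho_nz: "\<rho> \<noteq> 0" using prim by (simp add: primitive_element_def)

lemma q_ge: "card (UNIV::'f set) \<ge> 7"
proof -
  have "card {0::'f, 1} \<le> card (UNIV::'f set)" by (rule card_mono) auto
  hence "card (UNIV::'f set) \<ge> 2" by simp
  moreover have e: "card (UNIV::'f set) = 6*(card (UNIV::'f set) div 6) + card (UNIV::'f set) mod 6" by simp
  ultimately have "card (UNIV::'f set) div 6 \<noteq> 0" using q6 by auto
  hence "card (UNIV::'f set) div 6 \<ge> 1" by simp
  thus ?thesis using e q6 by linarith
qed

lemma ex_ord: "\<exists>n>0. \<rho> ^ n = 1"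
proof -
  have "finite (range (\<lambda>j::nat. \<rho> ^ j))" by simp
  hence "\<not> inj (\<lambda>j::nat. \<rho> ^ j)" using finite_imageD by blast
  then obtain i k :: nat where ik: "\<rho>^i = \<rho>^k" "i \<noteq> k" unfolding inj_def by blast
  { fix i k :: nat assume "\<rho>^i = \<rho>^k" "i < k"
    hence "\<rho>^i * \<rho>^(k-i) = \<rho>^i * 1" by (metis power_add le_add_diff_inverse less_imp_le mult_1_right)
    hence "\<rho>^(k-i) = 1" using rho_nz by simp
    hence "\<exists>n>0. \<rho> ^ n = 1" using \<open>i<k\<close> by (intro exI[of _ "k-i"]) simp }
  thus ?thesis using ik by (metis linorder_neqE_nat)
qed

definition "ordr = (LEAST n. 0 < n \<and> \<rho> ^ n = 1)"

lemma ordr: "0 < ordr" "\<rho> ^ ordr = 1"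
  using LeastI_ex[OF ex_ord] unfolding ordr_def by auto

lemma ordr_min: "0 < n \<Longrightarrow> n < ordr \<Longrightarrow> \<rho> ^ n \<noteq> 1"
  using not_less_Least unfolding ordr_def by blast

lemma pow_mod: "\<rho> ^ j = \<rho> ^ (j mod ordr)"
proof -
  have "\<rho> ^ j = \<rho> ^ (ordr * (j div ordr) + j mod ordr)" by simp
  also have "\<dots> = (\<rho>^ordr)^(j div ordr) * \<rho>^(j mod ordr)" by (simp only: power_add power_mult)
  finally show ?thesis using ordr by simp
qed

lemma inj_ordr: "inj_on (\<lambda>j. \<rho>^j) {0..<ordr}"
proof (rule inj_onI, rule ccontr)
  { fix i k assume "\<rho>^i = \<rho>^k" "i < k" "k < ordr"
    hence "\<rho>^i * \<rho>^(k-i) = \<rho>^i * 1" by (metis power_add le_add_diff_inverse less_imp_le mult_1_right)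
    hence "\<rho>^(k-i) = 1" using rho_nz by simp
    hence False using ordr_min[of "k-i"] \<open>i<k\<close> \<open>k<ordr\<close> by simp }
  note * = this
  fix i k assume "i \<in> {0..<ordr}" "k \<in> {0..<ordr}" "\<rho>^i = \<rho>^k" "i \<noteq> k"
  thus False using * by (metis atLeastLessThan_iff linorder_neqE_nat)
qed

lemma ordr_eq: "ordr = card (UNIV::'f set) - 1"
proof -
  have img: "(\<lambda>j. \<rho>^j) ` {0..<ordr} = UNIV - {0}"
  proof
    show "(\<lambda>j. \<rho>^j) ` {0..<ordr} \<subseteq> UNIV - {0}" using rho_nz by auto
    show "UNIV - {0} \<subseteq> (\<lambda>j. \<rho>^j) ` {0..<ordr}"
    proof
      fix x :: 'f assume "x \<in> UNIV - {0}"
      then obtain j :: nat where "x = \<rho>^j" using prim unfolding primitive_element_def by auto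
      hence "x = \<rho>^(j mod ordr)" using pow_mod by simp
      moreover have "j mod ordr \<in> {0..<ordr}" using ordr by simp
      ultimately show "x \<in> (\<lambda>j. \<rho>^j) ` {0..<ordr}" by blast
    qed
  qed
  have "card ((\<lambda>j. \<rho>^j) ` {0..<ordr}) = ordr" using inj_ordr by (simp add: card_image)
  moreover have "card (UNIV - {0::'f}) = card (UNIV::'f set) - 1" by (simp add: card_Diff_singleton)
  ultimately show ?thesis using img by simp
qed

definition "rr = ordr div 6"

lemma ordr_rr: "ordr = 6 * rr" and rr_pos: "rr > 0"
  proof -
  have e: "card (UNIV::'f set) = 6*(card (UNIV::'f set) div 6) + card (UNIV::'f set) mod 6" by simp
  hence "card (UNIV::'f set) - 1 = 6 * (card (UNIV::'f set) div 6)" using q6 by linarith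
  hence "card (UNIV::'f set) - 1 = 6 * ((card (UNIV::'f set) - 1) div 6)" by simp
  thus "ordr = 6 * rr" unfolding rr_def using ordr_eq by simp
  thus "rr > 0" using q_ge ordr_eq by simp
qed

lemma pow_eq_mod3: "\<rho>^i = \<rho>^k \<Longrightarrow> i mod 3 = k mod 3"
proof -
  assume "\<rho>^i = \<rho>^k"
  hence "\<rho>^(i mod ordr) = \<rho>^(k mod ordr)" using pow_mod by metis
  hence "i mod ordr = k mod ordr" by (rule inj_onD[OF inj_ordr]) (use ordr(1) in auto)
  hence "i mod ordr mod 3 = k mod ordr mod 3" by simp
  moreover have "3 dvd ordr" using ordr_rr by simp
  ultimately show ?thesis by (simp add: mod_mod_cancel)
qed

definition "DD i = {x. \<exists>j::nat. x = \<rho>^j \<and> j mod 3 = i mod 3}"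

lemma DD_nz: "x \<in> DD i \<Longrightarrow> x \<noteq> 0" using rho_nz unfolding DD_def by auto

lemma DD_disj: "x \<in> DD i \<Longrightarrow> x \<in> DD k \<Longrightarrow> i mod 3 = k mod 3"
proof -
  assume "x \<in> DD i" "x \<in> DD k"
  then obtain j ja where "x = \<rho>^j" "j mod 3 = i mod 3" "x = \<rho>^ja" "ja mod 3 = k mod 3"
    unfolding DD_def by blast
  thus ?thesis using pow_eq_mod3[of j ja] by simp
qed

lemma DD_ex: "x \<noteq> 0 \<Longrightarrow> \<exists>i<3. x \<in> DD i"
proof -
  assume "x \<noteq> 0"
  then obtain j :: nat where "x = \<rho>^j" using prim unfolding primitive_element_def by auto
  thus ?thesis unfolding DD_def by (intro exI[of _ "j mod 3"] conjI CollectI exI[of _ j]) auto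
qed

lemma DD_mod: "i mod 3 = k mod 3 \<Longrightarrow> DD i = DD k" unfolding DD_def by simp

lemma DD_mult: "x \<in> DD i \<Longrightarrow> y \<in> DD k \<Longrightarrow> x * y \<in> DD (i + k)"
proof -
  assume "x \<in> DD i" "y \<in> DD k"
  then obtain j ja where "x = \<rho>^j" "j mod 3 = i mod 3" "y = \<rho>^ja" "ja mod 3 = k mod 3"
    unfolding DD_def by auto
  moreover have "(j + ja) mod 3 = (i + k) mod 3" using calculation by (metis mod_add_eq)
  ultimately show ?thesis unfolding DD_def by (intro CollectI exI[of _ "j+ja"]) (simp add: power_add)
qed

lemma one_DD: "1 \<in> DD 0" unfolding DD_def by (auto intro!: exI[of _ 0])

lemma minus_one_DD: "-1 \<in> DD 0"
proof -
  let ?x = "\<rho>^(3*rr)"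
  have "?x * ?x = 1" using ordr ordr_rr by (simp flip: power_add)
  hence "(?x - 1) * (?x + 1) = 0" by (simp add: algebra_simps)
  moreover have "?x \<noteq> 1"
    using ordr_min[of "3*rr"] rr_pos ordr_rr by simp
  ultimately have "?x = -1" by (simp add: eq_neg_iff_add_eq_0)
  thus ?thesis unfolding DD_def by (auto intro!: exI[of _ "3*rr"])
qed

lemma DD_neg: "x \<in> DD i \<Longrightarrow> -x \<in> DD i"
  using DD_mult[OF minus_one_DD, of x i] by simp

lemma aux_mod3: "(A::nat) + j = 6*m \<Longrightarrow> j mod 3 = i mod 3 \<Longrightarrow> A mod 3 = (2*i) mod 3"
proof -
  assume h: "A + j = 6*m" "j mod 3 = i mod 3"
  have "A mod 3 = (A + j + 2 * j) mod 3" by (simp add: algebra_simps)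
  also have "\<dots> = (2*j + (2*m)*3) mod 3" using h by (simp add: add.commute)
  also have "\<dots> = (2*j) mod 3" by (rule mod_mult_self1)
  also have "\<dots> = (2*(j mod 3)) mod 3" by (simp add: mod_mult_right_eq)
  also have "\<dots> = (2*i) mod 3" using h by (simp add: mod_mult_right_eq)
  finally show ?thesis .
qed
lemma DD_inv: "x \<in> DD i \<Longrightarrow> inverse x \<in> DD (2*i)"
proof -
  assume "x \<in> DD i"
  then obtain j where j: "x = \<rho>^j" "j mod 3 = i mod 3" unfolding DD_def by auto
  have e: "j*(ordr - 1) + j = j * ordr"
  proof -
    have "ordr - 1 + 1 = ordr" using ordr(1) by simp
    hence "j*(ordr - 1) + j = j * (ordr - 1 + 1)" by (simp add: algebra_simps)
    thus ?thesis using \<open>ordr - 1 + 1 = ordr\<close> by simp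
  qed
  have "x * \<rho>^(j*(ordr - 1)) = \<rho>^(j * ordr)" using j e
    by (simp flip: power_add add: add.commute)
  also have "\<dots> = 1" using ordr by (metis mult.commute power_mult power_one)
  finally have "inverse x = \<rho>^(j*(ordr - 1))" by (rule inverse_unique)
  moreover have "(j*(ordr - 1)) mod 3 = (2*i) mod 3"
    using aux_mod3[of "j*(ordr - 1)" j "rr * j" i] e j(2) ordr_rr by (simp add: algebra_simps)
  ultimately show ?thesis unfolding DD_def by auto
qed


lemma rr_card: "(card (UNIV::'f set) - 1) div 6 = rr"
  using ordr_eq unfolding rr_def by simp

lemma cyc_class_eq: "i < 3 \<Longrightarrow> cyc_class \<rho> i = DD i"
proof
  assume i: "i < 3"
  show "cyc_class \<rho> i \<subseteq> DD i"
  proof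
    fix x assume "x \<in> cyc_class \<rho> i"
    then obtain j where "x = \<rho>^(3*j+i)" unfolding cyc_class_def by blast
    moreover have "(3*j+i) mod 3 = i mod 3" by simp
    ultimately show "x \<in> DD i" unfolding DD_def by blast
  qed
  show "DD i \<subseteq> cyc_class \<rho> i"
  proof
    fix x assume "x \<in> DD i"
    then obtain j where j: "x = \<rho>^j" "j mod 3 = i mod 3" unfolding DD_def by blast
    define j' where "j' = j mod ordr"
    have x: "x = \<rho>^j'" using j pow_mod unfolding j'_def by metis
    have "3 dvd ordr" using ordr_rr by simp
    hence "j' mod 3 = i" using j i unfolding j'_def by (simp add: mod_mod_cancel)
    hence e: "j' = 3 * (j' div 3) + i" by (metis div_mult_mod_eq mult.commute)
    have "j' < 6 * rr" using ordr ordr_rr unfolding j'_def by (metis mod_less_divisor)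
    hence "j' div 3 < 2 * rr" by linarith
    thus "x \<in> cyc_class \<rho> i" unfolding cyc_class_def rr_card using x e
      by (intro CollectI exI[of _ "j' div 3"] conjI) auto
  qed
qed

lemma card_DD: "card (DD i) = 2 * rr"
proof -
  have "DD i = DD (i mod 3)" by (rule DD_mod) simp
  also have "\<dots> = cyc_class \<rho> (i mod 3)" by (rule cyc_class_eq[symmetric]) simp
  also have "\<dots> = (\<lambda>j. \<rho>^(3*j + i mod 3)) ` {..<2*rr}"
    unfolding cyc_class_def rr_card by (simp add: setcompr_eq_image lessThan_def)
  finally have e: "DD i = (\<lambda>j. \<rho>^(3*j + i mod 3)) ` {..<2*rr}" .
  have "inj_on (\<lambda>j. \<rho>^(3*j + i mod 3)) {..<2*rr}"
  proof (rule inj_onI)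
    fix a b assume ab: "a \<in> {..<2*rr}" "b \<in> {..<2*rr}" "\<rho>^(3*a + i mod 3) = \<rho>^(3*b + i mod 3)"
    have "3*a + i mod 3 \<in> {0..<ordr}" "3*b + i mod 3 \<in> {0..<ordr}" using ab(1,2) ordr_rr by auto
    hence "3*a + i mod 3 = 3*b + i mod 3" using inj_onD[OF inj_ordr ab(3)] by blast
    thus "a = b" by simp
  qed
  thus ?thesis using e by (simp add: card_image)
qed

lemma powi_mod: "\<rho> powi j = \<rho> powi (j mod int ordr)"
proof -
  let ?N = "int ordr"
  have "\<rho> powi j = \<rho> powi (j mod ?N + ?N * (j div ?N))" by simp
  also have "\<dots> = \<rho> powi (j mod ?N) * \<rho> powi (?N * (j div ?N))"
    by (rule power_int_add) (simp add: rho_nz)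
  also have "\<rho> powi (?N * (j div ?N)) = (\<rho> powi ?N) powi (j div ?N)" by (rule power_int_mult)
  also have "\<rho> powi ?N = 1" using ordr by simp
  finally show ?thesis by simp
qed

lemma powi_DD: "i < 3 \<Longrightarrow> {\<rho> powi j | j::int. j mod 3 = int i} = DD i"
proof
  assume i: "i < 3"
  show "{\<rho> powi j | j::int. j mod 3 = int i} \<subseteq> DD i"
  proof
    fix x assume "x \<in> {\<rho> powi j | j::int. j mod 3 = int i}"
    then obtain j :: int where j: "x = \<rho> powi j" "j mod 3 = int i" by blast
    define n where "n = nat (j mod int ordr)"
    have n: "int n = j mod int ordr" unfolding n_def using ordr by simp
    have "x = \<rho> ^ n" using j(1) powi_mod n by (metis power_int_of_nat)
    moreover have "int (n mod 3) = int i"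
    proof -
      have "(3::int) dvd int ordr" using ordr_rr by simp
      hence "j mod int ordr mod 3 = j mod 3" by (simp add: mod_mod_cancel)
      thus ?thesis using n j(2) by (simp add: of_nat_mod)
    qed
    moreover have "n mod 3 = i mod 3" using calculation(2) i by simp
    ultimately show "x \<in> DD i" unfolding DD_def by blast
  qed
  show "DD i \<subseteq> {\<rho> powi j | j::int. j mod 3 = int i}"
  proof
    fix x assume "x \<in> DD i"
    then obtain j where j: "x = \<rho>^j" "j mod 3 = i mod 3" unfolding DD_def by blast
    have "int j mod 3 = int i" using j(2) i by (metis mod_less of_nat_mod of_nat_numeral)
    thus "x \<in> {\<rho> powi j | j::int. j mod 3 = int i}" using j(1)
      by (intro CollectI exI[of _ "int j"]) simp
  qed
qed

definition "cn i k = card {t \<in> DD i. t + 1 \<in> DD k}"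

lemma cn_le: "cn i k \<le> cn k i"
proof -
  let ?A = "{t \<in> DD i. t + 1 \<in> DD k}" and ?B = "{t \<in> DD k. t + 1 \<in> DD i}"
  let ?f = "\<lambda>t::'f. - t - 1"
  have "inj_on ?f ?A" by (rule inj_onI) simp
  moreover have "?f ` ?A \<subseteq> ?B"
  proof
    fix y assume "y \<in> ?f ` ?A"
    then obtain t where t: "t \<in> DD i" "t + 1 \<in> DD k" "y = - t - 1" by blast
    have "y = - (t + 1)" unfolding t(3) by simp
    hence "y \<in> DD k" using DD_neg[OF t(2)] by metis
    moreover have "y + 1 = - t" unfolding t(3) by simp
    hence "y + 1 \<in> DD i" using DD_neg[OF t(1)] by metis
    ultimately show "y \<in> ?B" by blast
  qed
  hence "card (?f ` ?A) \<le> card ?B" by (intro card_mono) simp_all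
  ultimately have "card ?A \<le> card ?B" by (simp add: card_image)
  thus ?thesis unfolding cn_def .
qed

lemma cn_sym: "cn i k = cn k i" using cn_le[of i k] cn_le[of k i] by simp

lemma cn_mod: "cn i k = cn (i mod 3) (k mod 3)"
  unfolding cn_def using DD_mod[of i "i mod 3"] DD_mod[of k "k mod 3"] by simp

lemma cyc_num_cn: "cyc_num \<rho> 1 2 = cn 1 2"
proof -
  have "(\<lambda>x. x + 1) ` cyc_class \<rho> 1 \<inter> cyc_class \<rho> 2 = (\<lambda>x. x + 1) ` {t \<in> DD 1. t + 1 \<in> DD 2}"
    using cyc_class_eq[of 1] cyc_class_eq[of 2] by simp blast
  moreover have "inj_on (\<lambda>x::'f. x + 1) {t \<in> DD 1. t + 1 \<in> DD 2}" by (rule inj_onI) simp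
  ultimately show ?thesis unfolding cyc_num_def cn_def by (simp add: card_image)
qed

lemma DD_two_a: "u \<in> DD a \<Longrightarrow> x \<in> DD (b + 2*a) \<Longrightarrow> u * x \<in> DD b"
proof -
  assume "u \<in> DD a" "x \<in> DD (b + 2*a)"
  hence "u * x \<in> DD (a + (b + 2*a))" by (rule DD_mult)
  moreover have "(a + (b + 2*a)) mod 3 = b mod 3" by (simp add: algebra_simps) 
  ultimately show ?thesis using DD_mod by metis
qed

lemma CNT: "u \<in> DD a \<Longrightarrow> card {v \<in> DD b. v - u \<in> DD c} = cn (c + 2*a) (b + 2*a)"
proof -
  assume u: "u \<in> DD a"
  have u0: "u \<noteq> 0" using DD_nz[OF u] .
  let ?T = "{t \<in> DD (c + 2*a). t + 1 \<in> DD (b + 2*a)}"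
  have "{v \<in> DD b. v - u \<in> DD c} = (\<lambda>t. u * (t + 1)) ` ?T"
  proof
    show "(\<lambda>t. u * (t + 1)) ` ?T \<subseteq> {v \<in> DD b. v - u \<in> DD c}"
    proof
      fix v assume "v \<in> (\<lambda>t. u * (t + 1)) ` ?T"
      then obtain t where t: "t \<in> DD (c + 2*a)" "t + 1 \<in> DD (b + 2*a)" "v = u * (t + 1)" by blast
      have "v \<in> DD b" using DD_two_a[OF u t(2)] t(3) by simp
      moreover have "v - u = u * t" using t(3) by (simp add: algebra_simps)
      hence "v - u \<in> DD c" using DD_two_a[OF u t(1)] by simp
      ultimately show "v \<in> {v \<in> DD b. v - u \<in> DD c}" by blast
    qed
    show "{v \<in> DD b. v - u \<in> DD c} \<subseteq> (\<lambda>t. u * (t + 1)) ` ?T"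
    proof
      fix v assume v: "v \<in> {v \<in> DD b. v - u \<in> DD c}"
      have ui: "inverse u \<in> DD (2*a)" using DD_inv[OF u] .
      define t where "t = inverse u * (v - u)"
      have "t \<in> DD (c + 2*a)" unfolding t_def using DD_mult[OF ui, of "v - u" c] v by (simp add: add.commute)
      moreover have "t + 1 = inverse u * v" unfolding t_def using u0 by (simp add: field_simps)
      hence "t + 1 \<in> DD (b + 2*a)" using DD_mult[OF ui, of v b] v by (simp add: add.commute)
      moreover have "v = u * (t + 1)" using \<open>t + 1 = inverse u * v\<close> u0 by simp
      ultimately show "v \<in> (\<lambda>t. u * (t + 1)) ` ?T" by blast
    qed
  qed
  moreover have "inj_on (\<lambda>t. u * (t + 1)) ?T" using u0 by (intro inj_onI) simp
  ultimately show ?thesis unfolding cn_def by (simp add: card_image)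
qed



context
  fixes l :: nat and \<pi> :: "nat \<times> nat \<Rightarrow> nat"
  assumes l0: "0 < l" and bij: "bij_betw \<pi> Z22_star {0, 1, 2}"
begin

lemma pi_lt: "z \<in> Z22_star \<Longrightarrow> \<pi> z < 3"
proof -
  assume "z \<in> Z22_star"
  hence "\<pi> z \<in> {0, 1, 2}" by (rule bij_betw_apply[OF bij])
  thus ?thesis by auto
qed

lemma pi_inj: "z \<in> Z22_star \<Longrightarrow> w \<in> Z22_star \<Longrightarrow> \<pi> z = \<pi> w \<Longrightarrow> z = w"
  using inj_onD[OF bij_betw_imp_inj_on[OF bij]] by blast

lemma pi_DD: "z \<in> Z22_star \<Longrightarrow> w \<in> Z22_star \<Longrightarrow> x \<in> DD (\<pi> z) \<Longrightarrow> x \<in> DD (\<pi> w) \<Longrightarrow> z = w"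
proof -
  assume h: "z \<in> Z22_star" "w \<in> Z22_star" "x \<in> DD (\<pi> z)" "x \<in> DD (\<pi> w)"
  have "\<pi> z mod 3 = \<pi> w mod 3" using DD_disj[OF h(3,4)] .
  hence "\<pi> z = \<pi> w" using pi_lt[OF h(1)] pi_lt[OF h(2)] by simp
  thus ?thesis using pi_inj h(1,2) by blast
qed

lemma Sz_eq: "z \<in> Z22_star \<Longrightarrow> S_z \<pi> \<rho> z = (\<lambda>v. (0, z, v)) ` DD (\<pi> z)"
proof -
  assume z: "z \<in> Z22_star"
  have "S_z \<pi> \<rho> z = (\<lambda>v. (0, z, v)) ` {\<rho> powi j | j::int. j mod 3 = int (\<pi> z)}"
    unfolding S_z_def by blast
  also have "\<dots> = (\<lambda>v. (0, z, v)) ` DD (\<pi> z)" using powi_DD[OF pi_lt[OF z]] by simp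
  finally show ?thesis .
qed

lemma S0mem: "((a, w, v) \<in> (S0 l :: (nat \<times> (nat \<times> nat) \<times> 'b::zero) set)) \<longleftrightarrow> v = 0 \<and> a < l \<and> w \<in> Z4 \<and> (a, w) \<noteq> (0, (0, 0))"
  unfolding S0_def Z4_eq[symmetric] by auto
lemma imgmem: "((a, w, v) \<in> (\<lambda>(a, w). (a, w, 0::'b::zero)) ` A) \<longleftrightarrow> v = 0 \<and> (a, w) \<in> A"
  by auto
lemma S0_eq: "(S0 l :: (nat \<times> (nat \<times> nat) \<times> 'b::zero) set) = (\<lambda>(a, w). (a, w, 0)) ` ({0..<l} \<times> Z4 - {(0, (0, 0))})"
proof (rule set_eqI)
  fix s :: "nat \<times> (nat \<times> nat) \<times> 'b"
  obtain a w v where e: "s = (a, w, v)" by (cases s)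
  show "s \<in> S0 l \<longleftrightarrow> s \<in> (\<lambda>(a, w). (a, w, 0)) ` ({0..<l} \<times> Z4 - {(0, (0, 0))})"
    unfolding e S0mem imgmem by auto
qed

lemma SUmem: "(a, w, v) \<in> (\<Union>z\<in>Z22_star. S_z \<pi> \<rho> z) \<longleftrightarrow> a = 0 \<and> w \<in> Z22_star \<and> v \<in> DD (\<pi> w)"
proof
  assume "(a, w, v) \<in> (\<Union>z\<in>Z22_star. S_z \<pi> \<rho> z)"
  then obtain z where z: "z \<in> Z22_star" "(a, w, v) \<in> S_z \<pi> \<rho> z" by blast
  hence "(a, w, v) \<in> (\<lambda>v. (0, z, v)) ` DD (\<pi> z)" using Sz_eq[OF z(1)] by simp
  hence "a = 0 \<and> w = z \<and> v \<in> DD (\<pi> z)" by blast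
  thus "a = 0 \<and> w \<in> Z22_star \<and> v \<in> DD (\<pi> w)" using z(1) by simp
next
  assume h: "a = 0 \<and> w \<in> Z22_star \<and> v \<in> DD (\<pi> w)"
  hence "(a, w, v) \<in> (\<lambda>v. (0, w, v)) ` DD (\<pi> w)" by blast
  hence "(a, w, v) \<in> S_z \<pi> \<rho> w" using Sz_eq h by simp
  thus "(a, w, v) \<in> (\<Union>z\<in>Z22_star. S_z \<pi> \<rho> z)" using h by blast
qed

lemma Smem: "(a, w, v) \<in> S_pi l \<pi> \<rho> \<longleftrightarrow>
   (v = 0 \<and> a < l \<and> w \<in> Z4 \<and> (a, w) \<noteq> (0, (0, 0))) \<or> (a = 0 \<and> w \<in> Z22_star \<and> v \<in> DD (\<pi> w))"
  by (simp only: S_pi_def Un_iff S0mem SUmem)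

lemma S_sub: "S_pi l \<pi> \<rho> \<subseteq> G_set l"
proof
  fix s assume s: "s \<in> S_pi l \<pi> \<rho>"
  obtain a w v where e: "s = (a, w, v)" by (cases s)
  have "(v = 0 \<and> a < l \<and> w \<in> Z4 \<and> (a, w) \<noteq> (0, (0, 0))) \<or> (a = 0 \<and> w \<in> Z22_star \<and> v \<in> DD (\<pi> w))"
    using s unfolding e Smem .
  hence "a < l \<and> w \<in> Z4" using l0 unfolding Zstar by blast
  thus "s \<in> G_set l" unfolding e Vmem .
qed

lemma card_Z4: "card Z4 = 4" unfolding Z4_def by simp

lemma card_S0: "card (S0 l :: (nat \<times> (nat \<times> nat) \<times> 'f) set) = 4 * l - 1"
proof -
  have "inj_on (\<lambda>(a, w). (a, w, 0::'f)) ({0..<l} \<times> Z4 - {(0, (0, 0))})" by (rule inj_onI) auto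
  hence "card (S0 l :: (nat \<times> (nat \<times> nat) \<times> 'f) set) = card ({0..<l} \<times> Z4 - {(0, (0, 0))})" unfolding S0_eq by (rule card_image)
  also have "\<dots> = card ({0..<l} \<times> Z4) - 1" using l0 unfolding Z4_def
    by (intro card_Diff_singleton) auto
  also have "\<dots> = 4 * l - 1" using card_Z4 by (simp add: card_cartesian_product)
  finally show ?thesis .
qed

lemma card_S: "card (S_pi l \<pi> \<rho>) = 4 * l - 2 + card (UNIV :: 'f set)"
proof -
  let ?U = "\<Union>z\<in>Z22_star. S_z \<pi> \<rho> z"
  have "finite (G_set l :: (nat \<times> (nat \<times> nat) \<times> 'f) set)" unfolding G_set_def by simp
  hence "finite (S_pi l \<pi> \<rho>)" using S_sub finite_subset by blast
  hence fin: "finite (S0 l :: (nat \<times> (nat \<times> nat) \<times> 'f) set)" "finite ?U" unfolding S_pi_def by simp_all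
  have disj: "S0 l \<inter> ?U = {}"
  proof -
    { fix s assume s: "s \<in> S0 l" "s \<in> ?U"
      obtain a w v where e: "s = (a, w, v)" by (cases s)
      have "v = 0" using s(1) unfolding e S0mem by blast
      moreover have "v \<in> DD (\<pi> w)" using s(2) unfolding e SUmem by blast
      ultimately have False using DD_nz by blast }
    thus ?thesis by blast
  qed
  have cU: "card ?U = (\<Sum>z\<in>Z22_star. card (S_z \<pi> \<rho> z))"
  proof (rule card_UN_disjoint)
    show "finite Z22_star" unfolding Z22_star_def by simp
    show "\<forall>z\<in>Z22_star. finite (S_z \<pi> \<rho> z)"
    proof
      fix z assume z: "z \<in> Z22_star"
      show "finite (S_z \<pi> \<rho> z)" unfolding Sz_eq[OF z] by simp
    qed
    show "\<forall>z\<in>Z22_star. \<forall>w\<in>Z22_star. z \<noteq> w \<longrightarrow> S_z \<pi> \<rho> z \<inter> S_z \<pi> \<rho> w = {}"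
    proof (intro ballI impI)
      fix z w assume z: "z \<in> Z22_star" and w: "w \<in> Z22_star" and zw: "z \<noteq> w"
      show "S_z \<pi> \<rho> z \<inter> S_z \<pi> \<rho> w = {}" unfolding Sz_eq[OF z] Sz_eq[OF w] using zw by blast
    qed
  qed
  have "\<And>z. z \<in> Z22_star \<Longrightarrow> card (S_z \<pi> \<rho> z) = 2 * rr"
  proof -
    fix z assume z: "z \<in> Z22_star"
    have "inj_on (\<lambda>v::'f. (0::nat, z, v)) (DD (\<pi> z))" by (rule inj_onI) simp
    thus "card (S_z \<pi> \<rho> z) = 2 * rr" unfolding Sz_eq[OF z] by (simp add: card_image card_DD)
  qed
  hence "(\<Sum>z\<in>Z22_star. card (S_z \<pi> \<rho> z)) = (\<Sum>z\<in>Z22_star. 2 * rr)" by (rule sum.cong[OF refl])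
  also have "\<dots> = 3 * (2 * rr)" unfolding Z22_star_def by simp
  finally have "card ?U = 3 * (2 * rr)" using cU by simp
  hence "card (S_pi l \<pi> \<rho>) = (4 * l - 1) + 6 * rr"
    unfolding S_pi_def using card_Un_disjoint[OF fin disj] card_S0 by simp
  moreover have "card (UNIV :: 'f set) = 6 * rr + 1" using ordr_eq ordr_rr q_ge by simp
  ultimately show ?thesis using l0 by simp
qed


lemma caseA:
  assumes d: "d = (a0, w0, 0)" "a0 < l" "w0 \<in> Z4" "(a0, w0) \<noteq> (0, (0, 0))"
  shows "card {s \<in> S_pi l \<pi> \<rho>. G_minus l s d \<in> S_pi l \<pi> \<rho>} = 4 * l - 2"
proof -
  have eq: "{s \<in> S_pi l \<pi> \<rho>. G_minus l s d \<in> S_pi l \<pi> \<rho>} = S0 l - {d}"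
  proof (rule set_eqI)
    fix s :: "nat \<times> (nat \<times> nat) \<times> 'f"
    obtain a w v where e: "s = (a, w, v)" by (cases s)
    have N: "G_minus l s d = ((a + l - a0) mod l, zsub w w0, v)" unfolding e d Gm by simp
    show "s \<in> {s \<in> S_pi l \<pi> \<rho>. G_minus l s d \<in> S_pi l \<pi> \<rho>} \<longleftrightarrow> s \<in> S0 l - {d}"
    proof
      assume "s \<in> {s \<in> S_pi l \<pi> \<rho>. G_minus l s d \<in> S_pi l \<pi> \<rho>}"
      hence m1: "(a, w, v) \<in> S_pi l \<pi> \<rho>" and m2: "((a + l - a0) mod l, zsub w w0, v) \<in> S_pi l \<pi> \<rho>"
        using N unfolding e by simp_all
      have s1: "(v = 0 \<and> a < l \<and> w \<in> Z4 \<and> (a, w) \<noteq> (0, (0, 0))) \<or> (a = 0 \<and> w \<in> Z22_star \<and> v \<in> DD (\<pi> w))"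
        using m1 unfolding Smem .
      have s2: "(v = 0 \<and> (a + l - a0) mod l < l \<and> zsub w w0 \<in> Z4 \<and> ((a + l - a0) mod l, zsub w w0) \<noteq> (0, (0, 0))) \<or>
            ((a + l - a0) mod l = 0 \<and> zsub w w0 \<in> Z22_star \<and> v \<in> DD (\<pi> (zsub w w0)))"
        using m2 unfolding Smem .
      show "s \<in> S0 l - {d}"
      proof (cases "v = 0")
        case True
        hence h: "a < l" "w \<in> Z4" "(a, w) \<noteq> (0, (0, 0))" using s1 DD_nz by blast+
        have "((a + l - a0) mod l, zsub w w0) \<noteq> (0, (0, 0))" using s2 True DD_nz[of 0 "\<pi> (zsub w w0)"] by metis
        hence "(a, w) \<noteq> (a0, w0)" using M4[OF h(1) d(2)] zsub_0[OF h(2) d(3)] by auto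
        thus ?thesis unfolding e d using True h by (simp add: S0mem)
      next
        case False
        hence h: "a = 0" "w \<in> Z22_star" "v \<in> DD (\<pi> w)" using s1 by blast+
        have h2: "(a + l - a0) mod l = 0" "zsub w w0 \<in> Z22_star" "v \<in> DD (\<pi> (zsub w w0))"
          using s2 False by blast+
        have "zsub w w0 = w" using pi_DD[OF h2(2) h(2) h2(3) h(3)] .
        hence "w0 = (0, 0)" using zsub_self d(3) h(2) unfolding Zstar
          by (metis Diff_iff zsub_0 zsub_ne)
        moreover have "a0 = 0" using h2(1) h(1) M4[of 0 l a0] l0 d(2) by simp
        ultimately show ?thesis using d(4) by simp
      qed
    next
      assume "s \<in> S0 l - {d}"
      hence h: "v = 0" "a < l" "w \<in> Z4" "(a, w) \<noteq> (0, (0, 0))" "(a, w) \<noteq> (a0, w0)"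
        unfolding e d by (auto simp add: S0mem)
      have "((a + l - a0) mod l, zsub w w0) \<noteq> (0, (0, 0))"
        using h(5) M4[OF h(2) d(2)] zsub_0[OF h(3) d(3)] by auto
      moreover have "(a + l - a0) mod l < l" using l0 by simp
      ultimately have "((a + l - a0) mod l, zsub w w0, v) \<in> S_pi l \<pi> \<rho>" unfolding Smem using zsub_in[OF h(3) d(3)] h(1) by blast
      hence "G_minus l s d \<in> S_pi l \<pi> \<rho>" using N by simp
      moreover have "s \<in> S_pi l \<pi> \<rho>" unfolding e Smem using h by blast
      ultimately show "s \<in> {s \<in> S_pi l \<pi> \<rho>. G_minus l s d \<in> S_pi l \<pi> \<rho>}" by blast
    qed
  qed
  have "d \<in> S0 l" unfolding d S0mem using d by simp
  hence "card (S0 l - {d}) = card (S0 l :: (nat \<times> (nat \<times> nat) \<times> 'f) set) - 1"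
    by (intro card_Diff_singleton)
  thus ?thesis unfolding eq card_S0 by simp
qed


lemma card_Zstar_minus: "z0 \<in> Z22_star \<Longrightarrow> card (Z22_star - {z0}) = 2"
  by (simp add: card_Diff_singleton Z22_star_def)

lemma caseB:
  assumes d: "d = (0, z0, u)" "z0 \<in> Z22_star" "u \<in> DD (\<pi> z0)"
  shows "card {s \<in> S_pi l \<pi> \<rho>. G_minus l s d \<in> S_pi l \<pi> \<rho>} = 2 * cn 1 2"
proof -
  let ?F = "\<lambda>w. (\<lambda>v. (0::nat, w, v)) ` {v \<in> DD (\<pi> w). v - u \<in> DD (\<pi> (zsub w z0))}"
  have z0: "z0 \<in> Z4" "z0 \<noteq> (0, 0)" using d(2) unfolding Zstar by blast+
  have u0: "u \<noteq> 0" using DD_nz[OF d(3)] .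
  have eq: "{s \<in> S_pi l \<pi> \<rho>. G_minus l s d \<in> S_pi l \<pi> \<rho>} = (\<Union>w\<in>Z22_star - {z0}. ?F w)"
  proof (rule set_eqI)
    fix s :: "nat \<times> (nat \<times> nat) \<times> 'f"
    obtain a w v where e: "s = (a, w, v)" by (cases s)
    have N: "G_minus l (a, w, v) d = ((a + l - 0) mod l, zsub w z0, v - u)" unfolding d Gm by simp
    show "s \<in> {s \<in> S_pi l \<pi> \<rho>. G_minus l s d \<in> S_pi l \<pi> \<rho>} \<longleftrightarrow> s \<in> (\<Union>w\<in>Z22_star - {z0}. ?F w)"
    proof
      assume "s \<in> {s \<in> S_pi l \<pi> \<rho>. G_minus l s d \<in> S_pi l \<pi> \<rho>}"
      hence m1: "(a, w, v) \<in> S_pi l \<pi> \<rho>" and m2: "((a + l - 0) mod l, zsub w z0, v - u) \<in> S_pi l \<pi> \<rho>"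
        using N unfolding e by simp_all
      have s1: "(v = 0 \<and> a < l \<and> w \<in> Z4 \<and> (a, w) \<noteq> (0, (0, 0))) \<or> (a = 0 \<and> w \<in> Z22_star \<and> v \<in> DD (\<pi> w))"
        using m1 unfolding Smem .
      have s2: "(v - u = 0 \<and> (a + l - 0) mod l < l \<and> zsub w z0 \<in> Z4 \<and> ((a + l - 0) mod l, zsub w z0) \<noteq> (0, (0, 0))) \<or>
            ((a + l - 0) mod l = 0 \<and> zsub w z0 \<in> Z22_star \<and> v - u \<in> DD (\<pi> (zsub w z0)))"
        using m2 unfolding Smem .
      show "s \<in> (\<Union>w\<in>Z22_star - {z0}. ?F w)"
      proof (cases "v = 0")
        case True
        hence h: "a < l" "w \<in> Z4" "(a, w) \<noteq> (0, (0, 0))" using s1 DD_nz[of 0 "\<pi> w"] by metis+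
        have am: "(a + l - 0) mod l = a" using h(1) by simp
        have "v - u \<noteq> 0" using True u0 by simp
        hence h2: "a = 0" "zsub w z0 \<in> Z22_star" "- u \<in> DD (\<pi> (zsub w z0))" using s2 True am by simp_all
        have "-u \<in> DD (\<pi> z0)" using DD_neg[OF d(3)] .
        hence "zsub w z0 = z0" using pi_DD[OF h2(2) d(2) h2(3)] by simp
        hence "w = (0, 0)" using zsub_self[OF h(2) z0(1)] by simp
        hence False using h(3) h2(1) by simp
        thus ?thesis ..
      next
        case False
        hence h: "a = 0" "w \<in> Z22_star" "v \<in> DD (\<pi> w)" using s1 by blast+
        have wZ: "w \<in> Z4" using h(2) unfolding Zstar by blast
        have "w \<noteq> z0"
        proof
          assume "w = z0"
          hence "zsub w z0 = (0, 0)" using zsub_0[OF wZ z0(1)] by simp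
          moreover have "(a + l - 0) mod l = 0" using h(1) by simp
          ultimately show False using s2 unfolding Z22_star_def by simp
        qed
        have "zsub w z0 \<noteq> (0, 0)" using zsub_0[OF wZ z0(1)] \<open>w \<noteq> z0\<close> by simp
        moreover have "v \<noteq> u"
        proof
          assume "v = u"
          hence "w = z0" using pi_DD[OF h(2) d(2) h(3)] d(3) by simp
          thus False using \<open>w \<noteq> z0\<close> by simp
        qed
        ultimately have "v - u \<in> DD (\<pi> (zsub w z0))" using s2 h(1) by simp
        hence "v \<in> {v \<in> DD (\<pi> w). v - u \<in> DD (\<pi> (zsub w z0))}" using h(3) by blast
        hence "s \<in> ?F w" unfolding e h(1) by blast
        thus ?thesis using h(2) \<open>w \<noteq> z0\<close> by blast
      qed
    next
      assume "s \<in> (\<Union>w\<in>Z22_star - {z0}. ?F w)"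
      then obtain w' where w': "w' \<in> Z22_star" "w' \<noteq> z0" "s \<in> ?F w'" by blast
      then obtain v' where v': "v' \<in> DD (\<pi> w')" "v' - u \<in> DD (\<pi> (zsub w' z0))" "s = (0, w', v')" by blast
      hence h: "a = 0" "w = w'" "v = v'" using e by simp_all
      have wZ: "w \<in> Z4" using w'(1) h(2) unfolding Zstar by blast
      have "zsub w z0 \<noteq> (0, 0)" using zsub_0[OF wZ z0(1)] w'(2) h(2) by simp
      hence zs: "zsub w z0 \<in> Z22_star" using zsub_in[OF wZ z0(1)] unfolding Zstar by blast
      have "(a, w, v) \<in> S_pi l \<pi> \<rho>" unfolding Smem using h v' w' by simp
      moreover have "((a + l - 0) mod l, zsub w z0, v - u) \<in> S_pi l \<pi> \<rho>" unfolding Smem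
        using h v' zs by simp
      ultimately show "s \<in> {s \<in> S_pi l \<pi> \<rho>. G_minus l s d \<in> S_pi l \<pi> \<rho>}" using N e by simp
    qed
  qed
  have "card (\<Union>w\<in>Z22_star - {z0}. ?F w) = (\<Sum>w\<in>Z22_star - {z0}. card (?F w))"
  proof (rule card_UN_disjoint)
    show "finite (Z22_star - {z0})" unfolding Z22_star_def by simp
    show "\<forall>w\<in>Z22_star - {z0}. finite (?F w)" by simp
    show "\<forall>w\<in>Z22_star - {z0}. \<forall>w'\<in>Z22_star - {z0}. w \<noteq> w' \<longrightarrow> ?F w \<inter> ?F w' = {}" by blast
  qed
  also have "\<dots> = (\<Sum>w\<in>Z22_star - {z0}. cn 1 2)"
  proof (rule sum.cong[OF refl])
    fix w assume w: "w \<in> Z22_star - {z0}"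
    have wZ: "w \<in> Z4" "w \<noteq> (0, 0)" using w unfolding Zstar by blast+
    have "inj_on (\<lambda>v. (0::nat, w, v)) {v \<in> DD (\<pi> w). v - u \<in> DD (\<pi> (zsub w z0))}" by (rule inj_onI) simp
    hence "card (?F w) = card {v \<in> DD (\<pi> w). v - u \<in> DD (\<pi> (zsub w z0))}" by (rule card_image)
    also have "\<dots> = cn (\<pi> (zsub w z0) + 2 * \<pi> z0) (\<pi> w + 2 * \<pi> z0)" by (rule CNT[OF d(3)])
    also have "\<dots> = cn 1 2"
    proof -
      have zs0: "zsub w z0 \<noteq> (0, 0)" using zsub_0[OF wZ(1) z0(1)] w by simp
      have zs: "zsub w z0 \<in> Z22_star" using zsub_in[OF wZ(1) z0(1)] zs0 unfolding Zstar by blast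
      have n1: "zsub w z0 \<noteq> w" using zsub_ne[OF wZ(1) z0(1) z0(2)] .
      have n2: "zsub w z0 \<noteq> z0" using zsub_self[OF wZ(1) z0(1)] wZ(2) by simp
      have wz: "w \<in> Z22_star" "w \<noteq> z0" using w by simp_all
      have "\<pi> z0 \<noteq> \<pi> w" using pi_inj[OF d(2) wz(1)] wz(2) by metis
      moreover have "\<pi> z0 \<noteq> \<pi> (zsub w z0)" using pi_inj[OF d(2) zs] n2 by metis
      moreover have "\<pi> w \<noteq> \<pi> (zsub w z0)" using pi_inj[OF wz(1) zs] n1 by metis
      ultimately have "((\<pi> (zsub w z0) + 2 * \<pi> z0) mod 3 = 1 \<and> (\<pi> w + 2 * \<pi> z0) mod 3 = 2) \<or>
                      ((\<pi> (zsub w z0) + 2 * \<pi> z0) mod 3 = 2 \<and> (\<pi> w + 2 * \<pi> z0) mod 3 = 1)"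
        using Z3[OF pi_lt[OF d(2)] pi_lt[OF wz(1)] pi_lt[OF zs]] by blast
      thus ?thesis using cn_mod[of "\<pi> (zsub w z0) + 2 * \<pi> z0" "\<pi> w + 2 * \<pi> z0"] cn_sym[of 1 2] by auto
    qed
    finally show "card (?F w) = cn 1 2" .
  qed
  also have "\<dots> = 2 * cn 1 2" using card_Zstar_minus[OF d(2)] by simp
  finally show ?thesis unfolding eq .
qed


lemma card_V: "card (G_set l :: (nat \<times> (nat \<times> nat) \<times> 'f) set) = 4 * l * card (UNIV :: 'f set)"
  unfolding G_set_def by (simp add: card_cartesian_product)

lemma fin_V: "finite (G_set l :: (nat \<times> (nat \<times> nat) \<times> 'f) set)"
  unfolding G_set_def by simp

lemma degree: "x \<in> G_set l \<Longrightarrow> card {y \<in> G_set l. cay_adj l \<pi> \<rho> x y} = 4 * l - 2 + card (UNIV :: 'f set)"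
proof -
  assume x: "x \<in> G_set l"
  have "{y \<in> G_set l. cay_adj l \<pi> \<rho> x y} = G_plus l x ` S_pi l \<pi> \<rho>"
    unfolding cay_adj_def by (rule NB_eq[OF l0 x S_sub])
  moreover have "inj_on (G_plus l x) (S_pi l \<pi> \<rho>)"
    using inj_on_subset[OF GP_inj[OF l0 x] S_sub] .
  ultimately show ?thesis using card_S by (simp add: card_image)
qed

lemma lambda:
  assumes x: "x \<in> G_set l" and y: "y \<in> G_set l" and adj: "cay_adj l \<pi> \<rho> x y"
    and c: "4 * l - 2 = 2 * cn 1 2"
  shows "card {w \<in> G_set l. cay_adj l \<pi> \<rho> x w \<and> cay_adj l \<pi> \<rho> y w} = 4 * l - 2"
proof -
  let ?S = "S_pi l \<pi> \<rho>"
  define d where "d = G_minus l y x"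
  have dS: "d \<in> ?S" using adj unfolding cay_adj_def d_def .
  have "{w \<in> G_set l. cay_adj l \<pi> \<rho> x w \<and> cay_adj l \<pi> \<rho> y w} = G_plus l x ` {s \<in> ?S. G_minus l s d \<in> ?S}"
    unfolding cay_adj_def d_def by (rule CN_eq[OF l0 x y S_sub])
  moreover have "inj_on (G_plus l x) {s \<in> ?S. G_minus l s d \<in> ?S}"
  proof -
    have "{s \<in> ?S. G_minus l s d \<in> ?S} \<subseteq> G_set l" using S_sub by blast
    thus ?thesis by (rule inj_on_subset[OF GP_inj[OF l0 x]])
  qed
  ultimately have e: "card {w \<in> G_set l. cay_adj l \<pi> \<rho> x w \<and> cay_adj l \<pi> \<rho> y w} = card {s \<in> ?S. G_minus l s d \<in> ?S}"
    by (simp add: card_image)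
  obtain a0 w0 v0 where de: "d = (a0, w0, v0)" by (cases d)
  have "(v0 = 0 \<and> a0 < l \<and> w0 \<in> Z4 \<and> (a0, w0) \<noteq> (0, (0, 0))) \<or> (a0 = 0 \<and> w0 \<in> Z22_star \<and> v0 \<in> DD (\<pi> w0))"
    using dS unfolding de Smem .
  thus ?thesis
  proof
    assume h: "v0 = 0 \<and> a0 < l \<and> w0 \<in> Z4 \<and> (a0, w0) \<noteq> (0, (0, 0))"
    hence "d = (a0, w0, 0)" "a0 < l" "w0 \<in> Z4" "(a0, w0) \<noteq> (0, (0, 0))" using de by simp_all
    from caseA[OF this] show ?thesis unfolding e .
  next
    assume h: "a0 = 0 \<and> w0 \<in> Z22_star \<and> v0 \<in> DD (\<pi> w0)"
    hence "d = (0, w0, v0)" "w0 \<in> Z22_star" "v0 \<in> DD (\<pi> w0)" using de by simp_all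
    from caseB[OF this] show ?thesis unfolding e c .
  qed
qed

definition "CC = (\<lambda>(a, w). (a, w, 0::'f)) ` ({0..<l} \<times> Z4)"

lemma CCmem: "(a, w, v) \<in> CC \<longleftrightarrow> v = 0 \<and> a < l \<and> w \<in> Z4"
  unfolding CC_def by auto

lemma card_CC: "card CC = 4 * l"
proof -
  have "inj_on (\<lambda>(a, w). (a, w, 0::'f)) ({0..<l} \<times> Z4)" by (rule inj_onI) auto
  hence "card CC = card ({0..<l} \<times> Z4)" unfolding CC_def by (rule card_image)
  thus ?thesis using card_Z4 by (simp add: card_cartesian_product)
qed

lemma clique_CC: "is_clique (G_set l) (cay_adj l \<pi> \<rho>) CC"
  unfolding is_clique_def
proof (intro conjI ballI impI)
  show "CC \<subseteq> G_set l"
  proof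
    fix x assume "x \<in> CC"
    moreover obtain a w v where e: "x = (a, w, v)" by (cases x)
    ultimately show "x \<in> G_set l" unfolding e CCmem Vmem by simp
  qed
  fix x y assume x: "x \<in> CC" and y: "y \<in> CC" and xy: "x \<noteq> y"
  obtain a w v where ex: "x = (a, w, v)" by (cases x)
  obtain b z t where ey: "y = (b, z, t)" by (cases y)
  have hx: "v = 0" "a < l" "w \<in> Z4" using x unfolding ex CCmem by simp_all
  have hy: "t = 0" "b < l" "z \<in> Z4" using y unfolding ey CCmem by simp_all
  have "(b, z) \<noteq> (a, w)" using xy ex ey hx hy by auto
  hence "((b + l - a) mod l, zsub z w) \<noteq> (0, (0, 0))" using M4[OF hy(2) hx(2)] zsub_0[OF hy(3) hx(3)] by auto
  moreover have "(b + l - a) mod l < l" using l0 by simp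
  ultimately have "((b + l - a) mod l, zsub z w, t - v) \<in> S_pi l \<pi> \<rho>"
    unfolding Smem using zsub_in[OF hy(3) hx(3)] hx(1) hy(1) by simp
  thus "cay_adj l \<pi> \<rho> x y" unfolding cay_adj_def ex ey Gm .
qed

lemma regular_CC: "x \<in> G_set l - CC \<Longrightarrow> card {y \<in> CC. cay_adj l \<pi> \<rho> x y} = 1"
proof -
  assume x: "x \<in> G_set l - CC"
  obtain a w t where ex: "x = (a, w, t)" by (cases x)
  have h: "a < l" "w \<in> Z4" using x unfolding ex by (simp_all add: Vmem)
  have t0: "t \<noteq> 0" using x h unfolding ex by (simp add: CCmem)
  hence "- t \<noteq> 0" by simp
  then obtain k where k: "k < 3" "- t \<in> DD k" using DD_ex by blast
  have "k \<in> {0, 1, 2}" using k(1) by auto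
  hence "k \<in> \<pi> ` Z22_star" using bij unfolding bij_betw_def by simp
  then obtain z' where z': "z' \<in> Z22_star" "\<pi> z' = k" by blast
  have z'Z: "z' \<in> Z4" using z'(1) unfolding Zstar by blast
  have "{y \<in> CC. cay_adj l \<pi> \<rho> x y} = {(a, zsub z' w, 0)}"
  proof (rule set_eqI)
    fix y :: "nat \<times> (nat \<times> nat) \<times> 'f"
    obtain b z v where ey: "y = (b, z, v)" by (cases y)
    have N: "G_minus l y x = ((b + l - a) mod l, zsub z w, v - t)" unfolding ex ey Gm by simp
    show "y \<in> {y \<in> CC. cay_adj l \<pi> \<rho> x y} \<longleftrightarrow> y \<in> {(a, zsub z' w, 0)}"
    proof
      assume "y \<in> {y \<in> CC. cay_adj l \<pi> \<rho> x y}"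
      hence y1: "y \<in> CC" and y2: "G_minus l y x \<in> S_pi l \<pi> \<rho>" unfolding cay_adj_def by simp_all
      have hy: "v = 0" "b < l" "z \<in> Z4" using y1 unfolding ey CCmem by simp_all
      have "((b + l - a) mod l, zsub z w, - t) \<in> S_pi l \<pi> \<rho>" using y2 N hy(1) by simp
      hence "(b + l - a) mod l = 0" "zsub z w \<in> Z22_star" "- t \<in> DD (\<pi> (zsub z w))"
        unfolding Smem using \<open>- t \<noteq> 0\<close> by simp_all
      hence "b = a" "zsub z w = z'" using M4[OF hy(2) h(1)] pi_DD[OF _ z'(1) _] k(2) z'(2) by auto
      hence "z = zsub z' w" using zsub_sol[OF hy(3) h(2) z'Z] by simp
      thus "y \<in> {(a, zsub z' w, 0)}" using ey hy(1) \<open>b = a\<close> by simp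
    next
      assume "y \<in> {(a, zsub z' w, 0)}"
      hence hy: "b = a" "z = zsub z' w" "v = 0" using ey by simp_all
      have zZ: "z \<in> Z4" using zsub_in[OF z'Z h(2)] hy(2) by simp
      have "zsub z w = z'" using zsub_sol[OF zZ h(2) z'Z] hy(2) by simp
      hence "((b + l - a) mod l, zsub z w, v - t) \<in> S_pi l \<pi> \<rho>"
        unfolding Smem using hy z'(1) k(2) z'(2) by simp
      hence "cay_adj l \<pi> \<rho> x y" unfolding cay_adj_def N .
      moreover have "y \<in> CC" unfolding ey CCmem using hy h zZ by simp
      ultimately show "y \<in> {y \<in> CC. cay_adj l \<pi> \<rho> x y}" by simp
    qed
  qed
  thus ?thesis by simp
qed

lemma main:
  assumes c: "4 * l - 2 = 2 * cn 1 2"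
  shows "edge_regular (G_set l) (cay_adj l \<pi> \<rho>) (4 * l * card (UNIV :: 'f set)) (4 * l - 2 + card (UNIV :: 'f set)) (4 * l - 2)
     \<and> (\<exists>C. regular_clique (G_set l) (cay_adj l \<pi> \<rho>) C \<and> card C = 4 * l)"
proof
  have ex: "\<exists>x\<in>G_set l. \<exists>y\<in>G_set l. cay_adj l \<pi> \<rho> x y"
  proof (intro bexI)
    have "((0 + l - 0) mod l, zsub (0, 1) (0, 0), (0::'f) - 0) \<in> S_pi l \<pi> \<rho>"
      unfolding Smem using l0 by (simp add: Z4_def)
    thus "cay_adj l \<pi> \<rho> (0, (0, 0), 0) (0, (0, 1), 0)" unfolding cay_adj_def Gm .
    show "(0, (0, 0), 0::'f) \<in> G_set l" "(0, (0, 1), 0::'f) \<in> G_set l"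
      unfolding Vmem using l0 by (simp_all add: Z4_def)
  qed
  show "edge_regular (G_set l) (cay_adj l \<pi> \<rho>) (4 * l * card (UNIV :: 'f set)) (4 * l - 2 + card (UNIV :: 'f set)) (4 * l - 2)"
    unfolding edge_regular_def using fin_V card_V ex degree lambda[OF _ _ _ c] by blast
  have "regular_clique (G_set l) (cay_adj l \<pi> \<rho>) CC"
    unfolding regular_clique_def using clique_CC regular_CC by (intro conjI exI[of _ 1]) auto
  thus "\<exists>C. regular_clique (G_set l) (cay_adj l \<pi> \<rho>) C \<and> card C = 4 * l" using card_CC by blast
qed

end

end


theorem theorem3p6:
  fixes \<rho> :: "'f::{finite,field}"
    and \<pi> :: "nat \<times> nat \<Rightarrow> nat"
    and c l :: nat
  assumes "card (UNIV :: 'f set) mod 6 = 1"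
    and "primitive_element \<rho>"
    and "bij_betw \<pi> Z22_star {0, 1, 2}"
    and "c = cyc_num \<rho> 1 2"
    and "odd c"
    and "l = (c + 1) div 2"
  shows "edge_regular (G_set l) (cay_adj l \<pi> \<rho>) (4 * l * card (UNIV :: 'f set)) (4 * l - 2 + card (UNIV :: 'f set)) (4 * l - 2)
     \<and> (\<exists>C. regular_clique (G_set l) (cay_adj l \<pi> \<rho>) C \<and> card C = 4 * l)"
proof -
  obtain k where k: "c = 2 * k + 1" using assms(5) by (rule oddE)
  have lk: "l = k + 1" using assms(6) k by simp
  have l0: "0 < l" using lk by simp
  have "4 * l - 2 = 2 * c" using lk k by simp
  also have "c = cn \<rho> 1 2" using assms(4) cyc_num_cn[OF assms(2) assms(1)] by simp
  finally have e: "4 * l - 2 = 2 * cn \<rho> 1 2" .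
  show ?thesis by (rule main[OF assms(2) assms(1) l0 assms(3) e])
qed

end
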